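(* Let $\langle \mathbf{A},\{N_x\}_{x\in A}\rangle$ be a complete saturated $C_\omega$-structure, and let $\mathbf{V}^{\langle \mathbf{A},N\rangle}$ be a standard Leibniz model over it. Then $\mathbf{V}^{\langle \mathbf{A},N\rangle}$ verifies the Leibniz law: for every formula $\varphi(x)$ of $\mathcal{L}_{\langle \mathbf{A},N\rangle}$ with one free variable $x$ and all $u,v\in \mathbf{V}^{\langle \mathbf{A},N\rangle}$, $$\|u\approx v\|\wedge\|\varphi(u)\|\le\|\varphi(v)\|,$$ equivalently $\|(u\approx v\wedge\varphi(u))\to\varphi(v)\|=1$.
   Context: A generalized Heyting algebra is a distributive lattice $\langle B,\vee,\wedge,1\rangle$ with greatest element $1$ and a binary operation $\to$ such that $a\to b$ is the greatest $c$ with $a\wedge c\le b$. A $C_\omega$-structure is a pair $\langle \mathbf{A},\{N_x\}_{x\in A}\rangle$ where $\mathbf{A}$ is a generalized Heyting algebra and each $N_x\subseteq A$, such that (i) for every $x\in A$ there is $x'\in N_x$ with $x\vee x'=1$, and (ii) for every $x'\in N_x$ there is $x''\in N_{x'}$ with $x''\le x$. It is complete if $\mathbf{A}$ is a complete lattice (then $\mathbf{A}$ has a least element $0$ and is a complete Heyting algebra), and saturated if $N_x=\{y\in A: x\vee y=1\}$ for every $x\in A$ (so $1\in N_x$ for all $x$ and $N_1=A$). Fix a model $\mathbf{V}$ of set theory. By transfinite recursion let $\mathbf{V}^{\langle \mathbf{A},N\rangle}_\xi$ be the set of all functions $x$ with $\mathrm{ran}(x)\subseteq A$ and $\mathrm{dom}(x)\subseteq\mathbf{V}^{\langle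 \mathbf{A},N\rangle}_\zeta$ for some $\zeta<\xi$, and $\mathbf{V}^{\langle \mathbf{A},N\rangle}=\bigcup_\xi\mathbf{V}^{\langle \mathbf{A},N\rangle}_\xi$. The language $\mathcal{L}_{\langle \mathbf{A},N\rangle}$ is first-order with connectives $\wedge,\vee,\to,\neg$, quantifiers $\exists,\forall$, binary predicates $\in,\approx$, and a constant for each element of $\mathbf{V}^{\langle \mathbf{A},N\rangle}$. A truth-value map $\|\cdot\|$ from sentences to $A$ satisfies: $\|u\in v\|=\bigvee_{x\in\mathrm{dom}(v)}(v(x)\wedge\|x\approx u\|)$; $\|u\approx v\|=\bigwedge_{x\in\mathrm{dom}(u)}(u(x)\to\|x\in v\|)\wedge\bigwedge_{x\in\mathrm{dom}(v)}(v(x)\to\|x\in u\|)$; $\|\varphi\#\psi\|=\|\varphi\|\#\|\psi\|$ for $\#\in\{\wedge,\vee,\to\}$; $\|\neg\alpha\|\in N_{\|\alpha\|}$ and $\|\neg\neg\alpha\|\le\|\alpha\|$; $\|\exists x\varphi\|=\bigvee_{u\in\mathbf{V}^{\langle \mathbf{A},N\rangle}}\|\varphi(u)\|$, $\|\forall x\varphi\|=\bigwedge_{u\in\mathbf{V}^{\langle \mathbf{A},N\rangle}}\|\varphi(u)\|$. A standard Leibniz model over a complete saturated $C_\omega$-structure is $\mathbf{V}^{\langle \mathbf{A},N\rangle}$ with the truth-value map of this kind in which, for every sentence $\psi$ not of the form $\neg\phi$, $\|\neg\psi\|=1$ and $\|\neg\neg\psi\|=\|\psi\|$; consequently, if $\psi$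 (not of the form $\neg\phi$) is preceded by an odd number of negations the value is $1$, and by an even number the value is $\|\psi\|$. *)

theory Defs
  imports Main
begin

text \<open>The algebra A is the whole carrier of a type 'a of class complete_lattice.
  The Heyting implication a -> b is the greatest c with a meet c below b.\<close>

definition himp :: "'a::complete_lattice \<Rightarrow> 'a \<Rightarrow> 'a" where
  "himp a b = Sup {c. inf a c \<le> b}"

definition gen_heyting :: "'a::complete_lattice itself \<Rightarrow> bool" where
  "gen_heyting _ \<longleftrightarrow>
     (\<forall>a b c::'a. inf a (sup b c) = sup (inf a b) (inf a c)) \<and>
     (\<forall>a b::'a. inf a (himp a b) \<le> b)"

definition C_omega :: "('a::complete_lattice \<Rightarrow> 'a set) \<Rightarrow> bool" where
  "C_omega N \<longleftrightarrow> gen_heyting TYPE('a) \<and>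
     (\<forall>x. \<exists>x'\<in>N x. sup x x' = top) \<and>
     (\<forall>x. \<forall>x'\<in>N x. \<exists>x''\<in>N x'. x'' \<le> x)"

definition saturated :: "('a::complete_lattice \<Rightarrow> 'a set) \<Rightarrow> bool" where
  "saturated N \<longleftrightarrow> (\<forall>x. N x = {y. sup x y = top})"

text \<open>A system of names: a set U of names; each name u is a function with
  domain dm u (a set of names) and values val u x in A.  The membership
  relation "x in dm u" is well-founded (the hierarchy V_xi).\<close>

definition name_system :: "'n set \<Rightarrow> ('n \<Rightarrow> 'n set) \<Rightarrow> ('n \<Rightarrow> 'n \<Rightarrow> 'a) \<Rightarrow> bool" where
  "name_system U dm val \<longleftrightarrow>
     (\<forall>u\<in>U. dm u \<subseteq> U) \<and> wf {(x, u). u \<in> U \<and> x \<in> dm u}"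

datatype 'n trm = Var nat | Cst 'n

datatype 'n fm =
    Mem "'n trm" "'n trm"
  | Eqv "'n trm" "'n trm"
  | Conj "'n fm" "'n fm"
  | Disj "'n fm" "'n fm"
  | Impl "'n fm" "'n fm"
  | Neg "'n fm"
  | Ex nat "'n fm"
  | All nat "'n fm"

fun tvars :: "'n trm \<Rightarrow> nat set" where
  "tvars (Var i) = {i}" | "tvars (Cst _) = {}"

fun tconsts :: "'n trm \<Rightarrow> 'n set" where
  "tconsts (Var _) = {}" | "tconsts (Cst c) = {c}"

fun freevars :: "'n fm \<Rightarrow> nat set" where
  "freevars (Mem s t) = tvars s \<union> tvars t"
| "freevars (Eqv s t) = tvars s \<union> tvars t"
| "freevars (Conj p q) = freevars p \<union> freevars q"
| "freevars (Disj p q) = freevars p \<union> freevars q"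
| "freevars (Impl p q) = freevars p \<union> freevars q"
| "freevars (Neg p) = freevars p"
| "freevars (Ex i p) = freevars p - {i}"
| "freevars (All i p) = freevars p - {i}"

fun fconsts :: "'n fm \<Rightarrow> 'n set" where
  "fconsts (Mem s t) = tconsts s \<union> tconsts t"
| "fconsts (Eqv s t) = tconsts s \<union> tconsts t"
| "fconsts (Conj p q) = fconsts p \<union> fconsts q"
| "fconsts (Disj p q) = fconsts p \<union> fconsts q"
| "fconsts (Impl p q) = fconsts p \<union> fconsts q"
| "fconsts (Neg p) = fconsts p"
| "fconsts (Ex i p) = fconsts p"
| "fconsts (All i p) = fconsts p"

fun tsubst :: "nat \<Rightarrow> 'n \<Rightarrow> 'n trm \<Rightarrow> 'n trm" where
  "tsubst x u (Var i) = (if i = x then Cst u else Var i)"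
| "tsubst x u (Cst c) = Cst c"

fun subst :: "nat \<Rightarrow> 'n \<Rightarrow> 'n fm \<Rightarrow> 'n fm" where
  "subst x u (Mem s t) = Mem (tsubst x u s) (tsubst x u t)"
| "subst x u (Eqv s t) = Eqv (tsubst x u s) (tsubst x u t)"
| "subst x u (Conj p q) = Conj (subst x u p) (subst x u q)"
| "subst x u (Disj p q) = Disj (subst x u p) (subst x u q)"
| "subst x u (Impl p q) = Impl (subst x u p) (subst x u q)"
| "subst x u (Neg p) = Neg (subst x u p)"
| "subst x u (Ex i p) = (if i = x then Ex i p else Ex i (subst x u p))"
| "subst x u (All i p) = (if i = x then All i p else All i (subst x u p))"

definition sentence :: "'n set \<Rightarrow> 'n fm \<Rightarrow> bool" where
  "sentence U p \<longleftrightarrow> freevars p = {} \<and> fconsts p \<subseteq> U"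

fun is_neg :: "'n fm \<Rightarrow> bool" where
  "is_neg (Neg _) = True" | "is_neg _ = False"

definition truth_map ::
  "('a::complete_lattice \<Rightarrow> 'a set) \<Rightarrow> 'n set \<Rightarrow> ('n \<Rightarrow> 'n set) \<Rightarrow> ('n \<Rightarrow> 'n \<Rightarrow> 'a)
   \<Rightarrow> ('n fm \<Rightarrow> 'a) \<Rightarrow> bool" where
  "truth_map N U dm val tv \<longleftrightarrow>
     (\<forall>u\<in>U. \<forall>v\<in>U. tv (Mem (Cst u) (Cst v)) =
         (SUP x\<in>dm v. inf (val v x) (tv (Eqv (Cst x) (Cst u))))) \<and>
     (\<forall>u\<in>U. \<forall>v\<in>U. tv (Eqv (Cst u) (Cst v)) =
         inf (INF x\<in>dm u. himp (val u x) (tv (Mem (Cst x) (Cst v))))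
             (INF x\<in>dm v. himp (val v x) (tv (Mem (Cst x) (Cst u))))) \<and>
     (\<forall>p q. sentence U p \<longrightarrow> sentence U q \<longrightarrow>
         tv (Conj p q) = inf (tv p) (tv q) \<and>
         tv (Disj p q) = sup (tv p) (tv q) \<and>
         tv (Impl p q) = himp (tv p) (tv q)) \<and>
     (\<forall>p. sentence U p \<longrightarrow> tv (Neg p) \<in> N (tv p) \<and> tv (Neg (Neg p)) \<le> tv p) \<and>
     (\<forall>i p. sentence U (Ex i p) \<longrightarrow> tv (Ex i p) = (SUP u\<in>U. tv (subst i u p))) \<and>
     (\<forall>i p. sentence U (All i p) \<longrightarrow> tv (All i p) = (INF u\<in>U. tv (subst i u p)))"

definition standard_leibniz ::
  "('a::complete_lattice \<Rightarrow> 'a set) \<Rightarrow> 'n set \<Rightarrow> ('n \<Rightarrow> 'n set) \<Rightarrow> ('n \<Rightarrow> 'n \<Rightarrow> 'a)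
   \<Rightarrow> ('n fm \<Rightarrow> 'a) \<Rightarrow> bool" where
  "standard_leibniz N U dm val tv \<longleftrightarrow>
     C_omega N \<and> saturated N \<and> name_system U dm val \<and> truth_map N U dm val tv \<and>
     (\<forall>p n. sentence U p \<longrightarrow> \<not> is_neg p \<longrightarrow>
        tv ((Neg ^^ n) p) = (if odd n then top else tv p))"

end

theory Submission
  imports Defs
begin

lemma himp_greatest: "inf a c \<le> b \<Longrightarrow> c \<le> himp a b"
  unfolding himp_def by (rule Sup_upper) simp

lemma himp_mp: "gen_heyting TYPE('a::complete_lattice) \<Longrightarrow> inf (a::'a) (himp a b) \<le> b"
  unfolding gen_heyting_def by blast

lemma distr: "gen_heyting TYPE('a::complete_lattice) \<Longrightarrow>
   inf (a::'a) (sup b c) = sup (inf a b) (inf a c)"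
  unfolding gen_heyting_def by blast

lemma inf_SUP_le:
  assumes H: "gen_heyting TYPE('a::complete_lattice)"
  shows "inf (a::'a) (SUP x\<in>S. f x) \<le> (SUP x\<in>S. inf a (f x))"
proof -
  have "(SUP x\<in>S. f x) \<le> himp a (SUP x\<in>S. inf a (f x))"
  proof (rule SUP_least)
    fix x assume "x \<in> S"
    then show "f x \<le> himp a (SUP x\<in>S. inf a (f x))"
      by (intro himp_greatest) (rule SUP_upper)
  qed
  then have "inf a (SUP x\<in>S. f x) \<le> inf a (himp a (SUP x\<in>S. inf a (f x)))"
    by (rule inf_mono[OF order_refl])
  also have "\<dots> \<le> (SUP x\<in>S. inf a (f x))" by (rule himp_mp[OF H])
  finally show ?thesis .
qed

lemma SUP_inf_le:
  assumes H: "gen_heyting TYPE('a::complete_lattice)"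
  shows "inf (SUP x\<in>S. f x) (a::'a) \<le> (SUP x\<in>S. inf (f x) a)"
  using inf_SUP_le[OF H, of a f S] by (simp add: inf_commute)

lemma SUP_mono_in: "(\<And>x. x \<in> A \<Longrightarrow> f x \<le> g x) \<Longrightarrow> (SUP x\<in>A. f x) \<le> (SUP x\<in>A. (g x::'a::complete_lattice))"
  by (rule SUP_mono) blast

context
  fixes N :: "'a::complete_lattice \<Rightarrow> 'a set"
    and U :: "'n set" and dm :: "'n \<Rightarrow> 'n set" and val :: "'n \<Rightarrow> 'n \<Rightarrow> 'a"
    and tv :: "'n fm \<Rightarrow> 'a"
  assumes H: "gen_heyting TYPE('a)" and NS: "name_system U dm val"
    and TM: "truth_map N U dm val tv"
begin

lemma mem_eq: "u \<in> U \<Longrightarrow> v \<in> U \<Longrightarrow> tv (Mem (Cst u) (Cst v)) =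
         (SUP x\<in>dm v. inf (val v x) (tv (Eqv (Cst x) (Cst u))))"
  using TM unfolding truth_map_def by blast

lemma eqv_eq: "u \<in> U \<Longrightarrow> v \<in> U \<Longrightarrow> tv (Eqv (Cst u) (Cst v)) =
         inf (INF x\<in>dm u. himp (val u x) (tv (Mem (Cst x) (Cst v))))
             (INF x\<in>dm v. himp (val v x) (tv (Mem (Cst x) (Cst u))))"
  using TM unfolding truth_map_def by blast

lemma dmU: "u \<in> U \<Longrightarrow> x \<in> dm u \<Longrightarrow> x \<in> U"
  using NS unfolding name_system_def by blast

lemma wfR: "wf {(x, u). u \<in> U \<and> x \<in> dm u}"
  using NS unfolding name_system_def by blast

lemma eq_sym: "u \<in> U \<Longrightarrow> v \<in> U \<Longrightarrow>
   tv (Eqv (Cst u) (Cst v)) = tv (Eqv (Cst v) (Cst u))"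
  by (simp add: eqv_eq inf_commute)

lemma eq_refl: "u \<in> U \<Longrightarrow> tv (Eqv (Cst u) (Cst u)) = top"
proof (induction u rule: wf_induct[OF wfR])
  case (1 u)
  have "val u x \<le> tv (Mem (Cst x) (Cst u))" if x: "x \<in> dm u" for x
  proof -
    have xU: "x \<in> U" using dmU[OF 1(2) x] .
    have "val u x = inf (val u x) (tv (Eqv (Cst x) (Cst x)))"
      using 1(1) x 1(2) xU by simp
    also have "\<dots> \<le> (SUP y\<in>dm u. inf (val u y) (tv (Eqv (Cst y) (Cst x))))"
      using x by (rule SUP_upper)
    also have "\<dots> = tv (Mem (Cst x) (Cst u))" using mem_eq[OF xU 1(2)] by simp
    finally show ?thesis .
  qed
  then have "\<forall>x\<in>dm u. himp (val u x) (tv (Mem (Cst x) (Cst u))) = top"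
    by (auto intro!: top_le himp_greatest)
  then show ?case using eqv_eq[OF 1(2) 1(2)] by simp
qed

lemma half_mp:
  assumes "u \<in> U" "v \<in> U" "x \<in> dm u"
  shows "inf (val u x) (tv (Eqv (Cst u) (Cst v))) \<le> tv (Mem (Cst x) (Cst v))"
proof -
  have "tv (Eqv (Cst u) (Cst v)) \<le> himp (val u x) (tv (Mem (Cst x) (Cst v)))"
    unfolding eqv_eq[OF assms(1,2)] using assms(3)
    by (meson INF_lower le_infI1)
  then have "inf (val u x) (tv (Eqv (Cst u) (Cst v))) \<le> inf (val u x) (himp (val u x) (tv (Mem (Cst x) (Cst v))))"
    by (rule inf_mono[OF order_refl])
  also have "\<dots> \<le> tv (Mem (Cst x) (Cst v))" by (rule himp_mp[OF H])
  finally show ?thesis .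
qed

lemma half:
  assumes U: "u \<in> U" "v \<in> U" "w \<in> U"
    and IH: "\<And>x y z. x \<in> dm u \<Longrightarrow> y \<in> dm v \<Longrightarrow> z \<in> dm w \<Longrightarrow>
       inf (tv (Eqv (Cst z) (Cst y))) (tv (Eqv (Cst y) (Cst x))) \<le> tv (Eqv (Cst z) (Cst x))"
  shows "inf (tv (Eqv (Cst u) (Cst v))) (tv (Eqv (Cst v) (Cst w)))
     \<le> (INF x\<in>dm u. himp (val u x) (tv (Mem (Cst x) (Cst w))))"
proof (rule INF_greatest)
  fix x assume x: "x \<in> dm u"
  have xU: "x \<in> U" using dmU[OF U(1) x] .
  show "inf (tv (Eqv (Cst u) (Cst v))) (tv (Eqv (Cst v) (Cst w))) \<le> himp (val u x) (tv (Mem (Cst x) (Cst w)))"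
  proof (rule himp_greatest)
    have 2: "inf (inf (val v y) (tv (Eqv (Cst y) (Cst x)))) (tv (Eqv (Cst v) (Cst w)))
        \<le> tv (Mem (Cst x) (Cst w))" if y: "y \<in> dm v" for y
    proof -
      have yU: "y \<in> U" using dmU[OF U(2) y] .
      have "inf (inf (val v y) (tv (Eqv (Cst y) (Cst x)))) (tv (Eqv (Cst v) (Cst w)))
          \<le> inf (tv (Mem (Cst y) (Cst w))) (tv (Eqv (Cst y) (Cst x)))"
        using half_mp[OF U(2) U(3) y] by (meson inf_le1 inf_le2 le_inf_iff order_trans)
      also have "\<dots> = inf (SUP z\<in>dm w. inf (val w z) (tv (Eqv (Cst z) (Cst y)))) (tv (Eqv (Cst y) (Cst x)))"
        using mem_eq[OF yU U(3)] by simp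
      also have "\<dots> \<le> (SUP z\<in>dm w. inf (inf (val w z) (tv (Eqv (Cst z) (Cst y)))) (tv (Eqv (Cst y) (Cst x))))"
        by (rule SUP_inf_le[OF H])
      also have "\<dots> \<le> (SUP z\<in>dm w. inf (val w z) (tv (Eqv (Cst z) (Cst x))))"
      proof (rule SUP_mono_in)
        fix z assume z: "z \<in> dm w"
        have "inf (val w z) (inf (tv (Eqv (Cst z) (Cst y))) (tv (Eqv (Cst y) (Cst x))))
          \<le> inf (val w z) (tv (Eqv (Cst z) (Cst x)))"
          by (rule inf_mono[OF order_refl IH[OF x y z]])
        then show "inf (inf (val w z) (tv (Eqv (Cst z) (Cst y)))) (tv (Eqv (Cst y) (Cst x)))
          \<le> inf (val w z) (tv (Eqv (Cst z) (Cst x)))"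
          by (metis inf_assoc)
      qed
      also have "\<dots> = tv (Mem (Cst x) (Cst w))" using mem_eq[OF xU U(3)] by simp
      finally show ?thesis .
    qed
    have "inf (val u x) (inf (tv (Eqv (Cst u) (Cst v))) (tv (Eqv (Cst v) (Cst w))))
        \<le> inf (tv (Mem (Cst x) (Cst v))) (tv (Eqv (Cst v) (Cst w)))"
      using half_mp[OF U(1) U(2) x] by (simp add: inf_assoc[symmetric] le_infI1)
    also have "\<dots> = inf (SUP y\<in>dm v. inf (val v y) (tv (Eqv (Cst y) (Cst x)))) (tv (Eqv (Cst v) (Cst w)))"
      using mem_eq[OF xU U(2)] by simp
    also have "\<dots> \<le> (SUP y\<in>dm v. inf (inf (val v y) (tv (Eqv (Cst y) (Cst x)))) (tv (Eqv (Cst v) (Cst w))))"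
      by (rule SUP_inf_le[OF H])
    also have "\<dots> \<le> tv (Mem (Cst x) (Cst w))"
      using 2 by (rule SUP_least)
    finally show "inf (val u x) (inf (tv (Eqv (Cst u) (Cst v))) (tv (Eqv (Cst v) (Cst w))))
        \<le> tv (Mem (Cst x) (Cst w))" .
  qed
qed

lemma eq_trans: "u \<in> U \<Longrightarrow> v \<in> U \<Longrightarrow> w \<in> U \<Longrightarrow>
  inf (tv (Eqv (Cst u) (Cst v))) (tv (Eqv (Cst v) (Cst w))) \<le> tv (Eqv (Cst u) (Cst w))"
proof (induction u arbitrary: v w rule: wf_induct[OF wfR])
  case (1 u)
  have IH: "inf (tv (Eqv (Cst x) (Cst y))) (tv (Eqv (Cst y) (Cst z))) \<le> tv (Eqv (Cst x) (Cst z))"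
    if "x \<in> dm u" "y \<in> U" "z \<in> U" for x y z
    using 1(1) that 1(2) dmU by blast
  have IH2: "inf (tv (Eqv (Cst z) (Cst y))) (tv (Eqv (Cst y) (Cst x))) \<le> tv (Eqv (Cst z) (Cst x))"
    if "x \<in> dm u" "y \<in> U" "z \<in> U" for x y z
    using IH[OF that] dmU[OF 1(2) that(1)] that
    by (simp add: eq_sym inf_commute)
  have A: "inf (tv (Eqv (Cst u) (Cst v))) (tv (Eqv (Cst v) (Cst w)))
     \<le> (INF x\<in>dm u. himp (val u x) (tv (Mem (Cst x) (Cst w))))"
    using 1(2-4) by (rule half) (use IH2 dmU 1(3,4) in blast)
  have B0: "inf (tv (Eqv (Cst w) (Cst v))) (tv (Eqv (Cst v) (Cst u)))
     \<le> (INF x\<in>dm w. himp (val w x) (tv (Mem (Cst x) (Cst u))))"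
    using 1(4,3,2) by (rule half) (use IH dmU 1(3,4) in blast)
  have B: "inf (tv (Eqv (Cst u) (Cst v))) (tv (Eqv (Cst v) (Cst w)))
     \<le> (INF x\<in>dm w. himp (val w x) (tv (Mem (Cst x) (Cst u))))"
    using B0 1(2-4) by (simp add: eq_sym inf_commute)
  show ?case using A B eqv_eq[OF 1(2) 1(4)] by simp
qed

lemma mem_left: "u \<in> U \<Longrightarrow> w \<in> U \<Longrightarrow> b \<in> U \<Longrightarrow>
  inf (tv (Eqv (Cst u) (Cst w))) (tv (Mem (Cst u) (Cst b))) \<le> tv (Mem (Cst w) (Cst b))"
proof -
  assume U: "u \<in> U" "w \<in> U" "b \<in> U"
  have "inf (tv (Eqv (Cst u) (Cst w))) (tv (Mem (Cst u) (Cst b)))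
     = inf (tv (Eqv (Cst u) (Cst w))) (SUP x\<in>dm b. inf (val b x) (tv (Eqv (Cst x) (Cst u))))"
    using mem_eq[OF U(1,3)] by simp
  also have "\<dots> \<le> (SUP x\<in>dm b. inf (tv (Eqv (Cst u) (Cst w))) (inf (val b x) (tv (Eqv (Cst x) (Cst u)))))"
    by (rule inf_SUP_le[OF H])
  also have "\<dots> \<le> (SUP x\<in>dm b. inf (val b x) (tv (Eqv (Cst x) (Cst w))))"
  proof (rule SUP_mono_in)
    fix x assume x: "x \<in> dm b"
    have T: "inf (tv (Eqv (Cst x) (Cst u))) (tv (Eqv (Cst u) (Cst w))) \<le> tv (Eqv (Cst x) (Cst w))"
      using eq_trans dmU[OF U(3) x] U by blast
    show "inf (tv (Eqv (Cst u) (Cst w))) (inf (val b x) (tv (Eqv (Cst x) (Cst u))))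
        \<le> inf (val b x) (tv (Eqv (Cst x) (Cst w)))"
      using inf_mono[OF order_refl T, of "val b x"] by (metis inf_assoc inf_commute)
  qed
  also have "\<dots> = tv (Mem (Cst w) (Cst b))" using mem_eq[OF U(2,3)] by simp
  finally show ?thesis .
qed

lemma mem_right: "u \<in> U \<Longrightarrow> v \<in> U \<Longrightarrow> a \<in> U \<Longrightarrow>
  inf (tv (Eqv (Cst u) (Cst v))) (tv (Mem (Cst a) (Cst u))) \<le> tv (Mem (Cst a) (Cst v))"
proof -
  assume U: "u \<in> U" "v \<in> U" "a \<in> U"
  have "inf (tv (Eqv (Cst u) (Cst v))) (tv (Mem (Cst a) (Cst u)))
     = inf (tv (Eqv (Cst u) (Cst v))) (SUP x\<in>dm u. inf (val u x) (tv (Eqv (Cst x) (Cst a))))"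
    using mem_eq[OF U(3,1)] by simp
  also have "\<dots> \<le> (SUP x\<in>dm u. inf (tv (Eqv (Cst u) (Cst v))) (inf (val u x) (tv (Eqv (Cst x) (Cst a)))))"
    by (rule inf_SUP_le[OF H])
  also have "\<dots> \<le> tv (Mem (Cst a) (Cst v))"
  proof (rule SUP_least)
    fix x assume x: "x \<in> dm u"
    have xU: "x \<in> U" using dmU[OF U(1) x] .
    have "inf (tv (Eqv (Cst u) (Cst v))) (inf (val u x) (tv (Eqv (Cst x) (Cst a))))
       \<le> inf (tv (Eqv (Cst x) (Cst a))) (tv (Mem (Cst x) (Cst v)))"
      using half_mp[OF U(1,2) x]
      by (metis inf_commute inf_left_commute inf_mono order_refl)
    also have "\<dots> \<le> tv (Mem (Cst a) (Cst v))" by (rule mem_left[OF xU U(3) U(2)])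
    finally show "inf (tv (Eqv (Cst u) (Cst v))) (inf (val u x) (tv (Eqv (Cst x) (Cst a))))
       \<le> tv (Mem (Cst a) (Cst v))" .
  qed
  finally show ?thesis .
qed


lemma atom_mem:
  assumes s: "s = Var x \<or> (\<exists>c\<in>U. s = Cst c)" and t: "t = Var x \<or> (\<exists>c\<in>U. t = Cst c)"
    and U: "u \<in> U" "v \<in> U"
  shows "inf (tv (Eqv (Cst u) (Cst v))) (tv (Mem (tsubst x u s) (tsubst x u t)))
     \<le> tv (Mem (tsubst x v s) (tsubst x v t))"
proof -
  let ?e = "tv (Eqv (Cst u) (Cst v))"
  from s show ?thesis
  proof
    assume sx: "s = Var x"
    from t show ?thesis
    proof
      assume tx: "t = Var x"
      have "inf ?e (tv (Mem (Cst u) (Cst u))) \<le> inf ?e (tv (Mem (Cst v) (Cst u)))"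
        using mem_left[OF U(1,2) U(1)] by simp
      also have "\<dots> \<le> tv (Mem (Cst v) (Cst v))" using mem_right[OF U(1,2) U(2)] .
      finally show ?thesis using sx tx by simp
    next
      assume "\<exists>c\<in>U. t = Cst c"
      then obtain c where "c \<in> U" "t = Cst c" by blast
      then show ?thesis using sx mem_left[OF U(1,2) \<open>c \<in> U\<close>] by simp
    qed
  next
    assume "\<exists>c\<in>U. s = Cst c"
    then obtain c where c: "c \<in> U" "s = Cst c" by blast
    from t show ?thesis
    proof
      assume tx: "t = Var x"
      then show ?thesis using c mem_right[OF U(1,2) c(1)] by simp
    next
      assume "\<exists>c\<in>U. t = Cst c"
      then obtain d where "d \<in> U" "t = Cst d" by blast
      then show ?thesis using c by simp
    qed
  qed
qed

lemma atom_eqv: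
  assumes s: "s = Var x \<or> (\<exists>c\<in>U. s = Cst c)" and t: "t = Var x \<or> (\<exists>c\<in>U. t = Cst c)"
    and U: "u \<in> U" "v \<in> U"
  shows "inf (tv (Eqv (Cst u) (Cst v))) (tv (Eqv (tsubst x u s) (tsubst x u t)))
     \<le> tv (Eqv (tsubst x v s) (tsubst x v t))"
proof -
  let ?e = "tv (Eqv (Cst u) (Cst v))"
  from s show ?thesis
  proof
    assume sx: "s = Var x"
    from t show ?thesis
    proof
      assume tx: "t = Var x"
      show ?thesis using sx tx eq_refl[OF U(2)] by simp
    next
      assume "\<exists>c\<in>U. t = Cst c"
      then obtain c where c: "c \<in> U" "t = Cst c" by blast
      then show ?thesis using sx eq_trans[OF U(2) U(1) c(1)] eq_sym[OF U] by simp
    qed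
  next
    assume "\<exists>c\<in>U. s = Cst c"
    then obtain c where c: "c \<in> U" "s = Cst c" by blast
    from t show ?thesis
    proof
      assume tx: "t = Var x"
      then show ?thesis using c eq_trans[OF c(1) U] by (simp add: inf_commute)
    next
      assume "\<exists>c\<in>U. t = Cst c"
      then obtain d where "d \<in> U" "t = Cst d" by blast
      then show ?thesis using c by simp
    qed
  qed
qed

end

lemma trm_cases: "tvars s \<subseteq> {x} \<Longrightarrow> tconsts s \<subseteq> U \<Longrightarrow> s = Var x \<or> (\<exists>c\<in>U. s = Cst c)"
  by (cases s) auto

lemma subst_freevars: "freevars (subst x u p) = freevars p - {x}"
proof (induction p)
  case (Mem s t) then show ?case by (cases s; cases t) auto
next
  case (Eqv s t) then show ?case by (cases s; cases t) auto
qed auto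

lemma subst_fconsts: "fconsts (subst x u p) \<subseteq> fconsts p \<union> {u}"
proof (induction p)
  case (Mem s t) then show ?case by (cases s; cases t) auto
next
  case (Eqv s t) then show ?case by (cases s; cases t) auto
qed auto

lemma tsubst_size: "size (tsubst x u t) = size t"
  by (cases t) auto

lemma subst_size: "size (subst x u p) = size p"
  by (induction p) (auto simp: tsubst_size)

lemma subst_comm: "i \<noteq> x \<Longrightarrow> subst i w (subst x u p) = subst x u (subst i w p)"
proof (induction p)
  case (Mem s t) then show ?case by (cases s; cases t) auto
next
  case (Eqv s t) then show ?case by (cases s; cases t) auto
qed auto

lemma subst_negpow: "subst x u ((Neg ^^ n) q) = (Neg ^^ n) (subst x u q)"
  by (induction n) auto

lemma is_neg_subst: "is_neg (subst x u q) = is_neg q"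
  by (cases q) auto

lemma negpow_props: "freevars ((Neg ^^ n) q) = freevars q" "fconsts ((Neg ^^ n) q) = fconsts q"
    "size ((Neg ^^ n) q) = size q + n"
  by (induction n) auto

lemma neg_decomp: "\<exists>n q. p = (Neg ^^ n) q \<and> \<not> is_neg q"
proof (induction p)
  case (Neg p)
  then obtain n q where "p = (Neg ^^ n) q" "\<not> is_neg q" by blast
  then have "Neg p = (Neg ^^ Suc n) q" by simp
  then show ?case using \<open>\<not> is_neg q\<close> by blast
qed (metis funpow_0 is_neg.simps)+

lemma subst_sentence: "freevars p \<subseteq> {x} \<Longrightarrow> fconsts p \<subseteq> U \<Longrightarrow> w \<in> U \<Longrightarrow> sentence U (subst x w p)"
  unfolding sentence_def using subst_freevars[of x w p] subst_fconsts[of x w p] by auto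


context
  fixes N :: "'a::complete_lattice \<Rightarrow> 'a set"
    and U :: "'n set" and dm :: "'n \<Rightarrow> 'n set" and val :: "'n \<Rightarrow> 'n \<Rightarrow> 'a"
    and tv :: "'n fm \<Rightarrow> 'a"
  assumes H: "gen_heyting TYPE('a)" and NS: "name_system U dm val"
    and TM: "truth_map N U dm val tv"
    and SL: "\<forall>p n. sentence U p \<longrightarrow> \<not> is_neg p \<longrightarrow>
        tv ((Neg ^^ n) p) = (if odd n then top else tv p)"
begin

lemma conn: "sentence U p \<Longrightarrow> sentence U q \<Longrightarrow>
         tv (Conj p q) = inf (tv p) (tv q) \<and>
         tv (Disj p q) = sup (tv p) (tv q) \<and>
         tv (Impl p q) = himp (tv p) (tv q)"
  using TM unfolding truth_map_def by blast

lemma exq: "sentence U (Ex i p) \<Longrightarrow> tv (Ex i p) = (SUP u\<in>U. tv (subst i u p))"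
  using TM unfolding truth_map_def by blast

lemma allq: "sentence U (All i p) \<Longrightarrow> tv (All i p) = (INF u\<in>U. tv (subst i u p))"
  using TM unfolding truth_map_def by blast

lemma leib:
  "freevars \<phi> \<subseteq> {x} \<Longrightarrow> fconsts \<phi> \<subseteq> U \<Longrightarrow> u \<in> U \<Longrightarrow> v \<in> U \<Longrightarrow>
   inf (tv (Eqv (Cst u) (Cst v))) (tv (subst x u \<phi>)) \<le> tv (subst x v \<phi>)"
proof (induction "size \<phi>" arbitrary: \<phi> u v rule: less_induct)
  case less
  let ?e = "tv (Eqv (Cst u) (Cst v))"
  obtain n q where nq: "\<phi> = (Neg ^^ n) q" "\<not> is_neg q" using neg_decomp by blast
  have fq: "freevars q \<subseteq> {x}" "fconsts q \<subseteq> U" using less(2,3) nq by (auto simp: negpow_props)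
  show ?case
  proof (cases "n = 0")
    case False
    have sz: "size q < size \<phi>" using nq(1) False by (simp add: negpow_props(3))
    have red: "tv (subst x w \<phi>) = (if odd n then top else tv (subst x w q))" if "w \<in> U" for w
      using SL subst_sentence[OF fq that] nq is_neg_subst subst_negpow by metis
    show ?thesis
    proof (cases "odd n")
      case True then show ?thesis using red less(5) by simp
    next
      case False then show ?thesis using red less(4,5) less(1)[OF sz fq less(4,5)] by simp
    qed
  next
    case True
    then have q: "\<phi> = q" using nq by simp
    note fv = less(2)[unfolded q] and fc = less(3)[unfolded q]
    note IH = less(1)[unfolded q]
    note uv = less(4,5)
    have "inf ?e (tv (subst x u q)) \<le> tv (subst x v q)"
    proof (cases q)
      case (Mem s t)
      have "s = Var x \<or> (\<exists>c\<in>U. s = Cst c)" "t = Var x \<or> (\<exists>c\<in>U. t = Cst c)"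
        using fv fc Mem trm_cases[of s x U] trm_cases[of t x U] by auto
      then show ?thesis unfolding Mem using atom_mem[OF H NS TM _ _ uv] by simp
    next
      case (Eqv s t)
      have "s = Var x \<or> (\<exists>c\<in>U. s = Cst c)" "t = Var x \<or> (\<exists>c\<in>U. t = Cst c)"
        using fv fc Eqv trm_cases[of s x U] trm_cases[of t x U] by auto
      then show ?thesis unfolding Eqv using atom_eqv[OF H NS TM _ _ uv] by simp
    next
      case (Neg p)
      then show ?thesis using nq by simp
    next
      case (Conj a b)
      have fa: "freevars a \<subseteq> {x}" "fconsts a \<subseteq> U" and fb: "freevars b \<subseteq> {x}" "fconsts b \<subseteq> U"
        using fv fc Conj by auto
      have sa: "size a < size q" "size b < size q" using Conj by auto
      have A: "inf ?e (tv (subst x u a)) \<le> tv (subst x v a)" using IH[OF sa(1) fa uv] .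
      have B: "inf ?e (tv (subst x u b)) \<le> tv (subst x v b)" using IH[OF sa(2) fb uv] .
      have "tv (subst x w q) = inf (tv (subst x w a)) (tv (subst x w b))" if "w \<in> U" for w
        using conn[OF subst_sentence[OF fa that] subst_sentence[OF fb that]] Conj by simp
      then show ?thesis using A B uv
        by (simp add: le_infI1 le_infI2 inf_mono inf.coboundedI1 inf.coboundedI2)
           (meson inf_le1 inf_le2 le_inf_iff order_trans)
    next
      case (Disj a b)
      have fa: "freevars a \<subseteq> {x}" "fconsts a \<subseteq> U" and fb: "freevars b \<subseteq> {x}" "fconsts b \<subseteq> U"
        using fv fc Disj by auto
      have sa: "size a < size q" "size b < size q" using Disj by auto
      have A: "inf ?e (tv (subst x u a)) \<le> tv (subst x v a)" using IH[OF sa(1) fa uv] .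
      have B: "inf ?e (tv (subst x u b)) \<le> tv (subst x v b)" using IH[OF sa(2) fb uv] .
      have D: "tv (subst x w q) = sup (tv (subst x w a)) (tv (subst x w b))" if "w \<in> U" for w
        using conn[OF subst_sentence[OF fa that] subst_sentence[OF fb that]] Disj by simp
      have "inf ?e (sup (tv (subst x u a)) (tv (subst x u b)))
         = sup (inf ?e (tv (subst x u a))) (inf ?e (tv (subst x u b)))" by (rule distr[OF H])
      also have "\<dots> \<le> sup (tv (subst x v a)) (tv (subst x v b))" using A B by (rule sup_mono)
      finally show ?thesis using D uv by simp
    next
      case (Impl a b)
      have fa: "freevars a \<subseteq> {x}" "fconsts a \<subseteq> U" and fb: "freevars b \<subseteq> {x}" "fconsts b \<subseteq> U"
        using fv fc Impl by auto
      have sa: "size a < size q" "size b < size q" using Impl by auto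
      have A: "inf ?e (tv (subst x v a)) \<le> tv (subst x u a)"
        using IH[OF sa(1) fa uv(2) uv(1)] eq_sym[OF H NS TM uv] by simp
      have B: "inf ?e (tv (subst x u b)) \<le> tv (subst x v b)" using IH[OF sa(2) fb uv] .
      have D: "tv (subst x w q) = himp (tv (subst x w a)) (tv (subst x w b))" if "w \<in> U" for w
        using conn[OF subst_sentence[OF fa that] subst_sentence[OF fb that]] Impl by simp
      let ?h = "himp (tv (subst x u a)) (tv (subst x u b))"
      have "inf (tv (subst x v a)) (inf ?e ?h) \<le> inf ?e (inf (tv (subst x u a)) ?h)"
        using A by (meson inf_le1 inf_le2 le_inf_iff order_trans)
      also have "\<dots> \<le> inf ?e (tv (subst x u b))"
        by (rule inf_mono[OF order_refl himp_mp[OF H]])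
      also have "\<dots> \<le> tv (subst x v b)" by (rule B)
      finally have "inf ?e ?h \<le> himp (tv (subst x v a)) (tv (subst x v b))"
        by (rule himp_greatest)
      then show ?thesis using D uv by simp
    next
      case (Ex i p)
      show ?thesis
      proof (cases "i = x")
        case True then show ?thesis using Ex by simp
      next
        case ix: False
        have fp: "freevars (subst i w p) \<subseteq> {x}" "fconsts (subst i w p) \<subseteq> U" if "w \<in> U" for w
          using fv fc Ex subst_freevars[of i w p] subst_fconsts[of i w p] that by auto
        have sz: "size (subst i w p) < size q" for w using Ex by (simp add: subst_size)
        have D: "tv (subst x w q) = (SUP y\<in>U. tv (subst x w (subst i y p)))" if "w \<in> U" for w
        proof -
          have "sentence U (subst x w q)" using subst_sentence[OF fv fc that] .
          then have "tv (Ex i (subst x w p)) = (SUP y\<in>U. tv (subst i y (subst x w p)))"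
            using Ex ix by (simp add: exq)
          then show ?thesis using Ex ix by (simp add: subst_comm)
        qed
        have "inf ?e (SUP y\<in>U. tv (subst x u (subst i y p)))
            \<le> (SUP y\<in>U. inf ?e (tv (subst x u (subst i y p))))" by (rule inf_SUP_le[OF H])
        also have "\<dots> \<le> (SUP y\<in>U. tv (subst x v (subst i y p)))"
          by (rule SUP_mono_in) (rule IH[OF sz fp uv], assumption+)
        finally show ?thesis using D uv by simp
      qed
    next
      case (All i p)
      show ?thesis
      proof (cases "i = x")
        case True then show ?thesis using All by simp
      next
        case ix: False
        have fp: "freevars (subst i w p) \<subseteq> {x}" "fconsts (subst i w p) \<subseteq> U" if "w \<in> U" for w
          using fv fc All subst_freevars[of i w p] subst_fconsts[of i w p] that by auto
        have sz: "size (subst i w p) < size q" for w using All by (simp add: subst_size)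
        have D: "tv (subst x w q) = (INF y\<in>U. tv (subst x w (subst i y p)))" if "w \<in> U" for w
        proof -
          have "sentence U (subst x w q)" using subst_sentence[OF fv fc that] .
          then have "tv (All i (subst x w p)) = (INF y\<in>U. tv (subst i y (subst x w p)))"
            using All ix by (simp add: allq)
          then show ?thesis using All ix by (simp add: subst_comm)
        qed
        have "inf ?e (INF y\<in>U. tv (subst x u (subst i y p))) \<le> (INF y\<in>U. tv (subst x v (subst i y p)))"
        proof (rule INF_greatest)
          fix y assume y: "y \<in> U"
          have "inf ?e (INF y\<in>U. tv (subst x u (subst i y p))) \<le> inf ?e (tv (subst x u (subst i y p)))"
            using y by (intro inf_mono order_refl INF_lower)
          also have "\<dots> \<le> tv (subst x v (subst i y p))" by (rule IH[OF sz fp[OF y] uv])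
          finally show "inf ?e (INF y\<in>U. tv (subst x u (subst i y p))) \<le> tv (subst x v (subst i y p))" .
        qed
        then show ?thesis using D uv by simp
      qed
    qed
    then show ?thesis using q by simp
  qed
qed

end

theorem theorem4p1:
  fixes N :: "'a::complete_lattice \<Rightarrow> 'a set"
    and U :: "'n set" and dm :: "'n \<Rightarrow> 'n set" and val :: "'n \<Rightarrow> 'n \<Rightarrow> 'a"
    and tv :: "'n fm \<Rightarrow> 'a"
  assumes "C_omega N" and "saturated N"
    and "standard_leibniz N U dm val tv"
    and "freevars \<phi> \<subseteq> {x}" and "fconsts \<phi> \<subseteq> U"
    and "u \<in> U" and "v \<in> U"
  shows "inf (tv (Eqv (Cst u) (Cst v))) (tv (subst x u \<phi>)) \<le> tv (subst x v \<phi>)"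
proof -
  have H: "gen_heyting TYPE('a)" using assms(1) unfolding C_omega_def by blast
  have NS: "name_system U dm val" and TM: "truth_map N U dm val tv"
    and SL: "\<forall>p n. sentence U p \<longrightarrow> \<not> is_neg p \<longrightarrow>
        tv ((Neg ^^ n) p) = (if odd n then top else tv p)"
    using assms(3) unfolding standard_leibniz_def by blast+
  show ?thesis by (rule leib[OF H NS TM SL assms(4-7)])
qed

end
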